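(* Let $\mathbb{H}$ be an infinite-dimensional separable real or complex Hilbert space, and let $P$ be a state on $L(\mathbb{H})$. If $x,y$ are atoms of $L(\mathbb{H})$ with $P(x)=1$ and $P(y)=0$, then $x\perp y$, and there is an atom $z\le x\vee y$ with $P(z)=\tfrac12$.
   Context: $L(\mathbb{H})$ denotes the lattice of closed subspaces of $\mathbb{H}$, ordered by inclusion; its atoms are the one-dimensional subspaces (rays), and $x\vee y$ is the closed span of $x$ and $y$. A state on $L(\mathbb{H})$ is a function $P$ from the atoms of $L(\mathbb{H})$ to $[0,\infty)$ such that $\sum_{j}P(x_j)=1$ for every maximal family $\{x_j\}$ of pairwise orthogonal atoms (i.e. for the rays spanned by any orthonormal basis). *)

theory Defs
  imports "HOL-Analysis.Analysis"
begin

text \<open>A complex Hilbert space is modelled as a real Hilbert space (the realification,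
with real inner product Re of the complex one) together with an orthogonal complex
structure J (multiplication by i). Complex-linear closed subspaces are exactly the
J-invariant closed real subspaces.\<close>

definition complex_structure :: "('a::real_inner \<Rightarrow> 'a) \<Rightarrow> bool" where
  "complex_structure J \<longleftrightarrow> linear J \<and> (\<forall>x. J (J x) = - x) \<and> (\<forall>x y. J x \<bullet> J y = x \<bullet> y)"

definition real_atoms :: "'a::real_inner set set" where
  "real_atoms = {span {v} | v. v \<noteq> 0}"

text \<open>Atoms of L(H) for a complex Hilbert space with complex structure J:
complex one-dimensional subspaces  C v = span_R {v, J v}.\<close>
definition complex_atoms :: "('a::real_inner \<Rightarrow> 'a) \<Rightarrow> 'a set set" where
  "complex_atoms J = {span {v, J v} | v. v \<noteq> 0}"

definition orth_sub :: "'a::real_inner set \<Rightarrow> 'a set \<Rightarrow> bool" where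
  "orth_sub x y \<longleftrightarrow> (\<forall>u\<in>x. \<forall>w\<in>y. u \<bullet> w = 0)"

definition join_sub :: "'a::real_normed_vector set \<Rightarrow> 'a set \<Rightarrow> 'a set" where
  "join_sub x y = closure (span (x \<union> y))"

definition max_orth_family :: "'a::real_inner set set \<Rightarrow> 'a set set \<Rightarrow> bool" where
  "max_orth_family A F \<longleftrightarrow> F \<subseteq> A \<and>
     (\<forall>x\<in>F. \<forall>y\<in>F. x \<noteq> y \<longrightarrow> orth_sub x y) \<and>
     \<not> (\<exists>z\<in>A. z \<notin> F \<and> (\<forall>x\<in>F. orth_sub z x))"

definition is_state :: "'a::real_inner set set \<Rightarrow> ('a set \<Rightarrow> real) \<Rightarrow> bool" where
  "is_state A P \<longleftrightarrow> (\<forall>x\<in>A. P x \<ge> 0) \<and> (\<forall>F. max_orth_family A F \<longrightarrow> (P has_sum 1) F)"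

end

theory Submission
  imports Defs
begin



lemma one_i_nz: "1 + \<i> * complex_of_real t \<noteq> 0"
  by (simp add: complex_eq_iff)

lemma one_mi_nz: "1 - \<i> * complex_of_real t \<noteq> 0"
  by (simp add: complex_eq_iff)

lemma cos_lb: "cos (x::real) \<ge> 1 - x^2 / 2"
proof -
  have "cos x = cos (2 * (x/2))" by simp
  also have "\<dots> = 1 - 2 * sin (x/2) ^ 2" by (rule cos_double_sin)
  finally have c: "cos x = 1 - 2 * sin (x/2) ^ 2" .
  have "\<bar>sin (x/2)\<bar> \<le> \<bar>x/2\<bar>" by (rule abs_sin_x_le_abs_x)
  then have "sin (x/2) ^ 2 \<le> (x/2)^2"
    by (metis abs_le_square_iff)
  then show ?thesis using c by (simp add: power_divide)
qed

lemma cos_pow_lb: assumes "\<bar>x\<bar> \<le> 1" shows "cos x ^ k \<ge> 1 - real k * x^2 / 2"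
proof -
  have x2: "x^2 \<le> 1" using abs_le_square_iff[of x 1] assms by simp
  have "1 + real k * (- (x^2/2)) \<le> (1 + (- (x^2/2))) ^ k"
    by (rule Bernoulli_inequality) (use x2 in simp)
  also have "\<dots> \<le> cos x ^ k"
    by (rule power_mono) (use cos_lb[of x] x2 in auto)
  finally show ?thesis by simp
qed

lemma cmod_1i: "cmod (1 + \<i> * complex_of_real r) = sqrt (1 + r^2)"
  by (simp add: cmod_def power2_eq_square)

lemma cmod_1mi: "cmod (1 - \<i> * complex_of_real r) = sqrt (1 + r^2)"
  by (simp add: cmod_def power2_eq_square)

locale gfr =
  fixes F :: "complex \<Rightarrow> real"
  assumes nonneg: "F Q \<ge> 0"
  and zero: "F 0 = 1"
  and compl: "Z \<noteq> 0 \<Longrightarrow> F Z + F (- Z / of_real ((cmod Z)^2)) = 1"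
  and splitF: "P \<noteq> 0 \<Longrightarrow> t \<noteq> 0 \<Longrightarrow> F P = F (P * (1 + \<i> * of_real t))
        + F (P * (1 - \<i> * of_real ((1 + (cmod P)^2) / ((cmod P)^2 * t))))"
begin

lemma le1: "F Q \<le> 1"
proof (cases "Q = 0")
  case True then show ?thesis using zero by simp
next
  case False then show ?thesis using compl[OF False] nonneg[of "- Q / of_real ((cmod Q)^2)"] by linarith
qed

lemma desc: assumes "P \<noteq> 0" shows "F (P * (1 + \<i> * of_real t)) \<le> F P"
proof (cases "t = 0")
  case True then show ?thesis by simp
next
  case False then show ?thesis using splitF[OF assms False] nonneg by (smt (verit))
qed

lemma m2: assumes P: "P \<noteq> 0" and h: "Re (Q * cnj P) \<ge> (cmod P)^2" shows "F Q \<le> F P"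
proof -
  define W where "W = Q / P"
  have QW: "Q = P * W" using P W_def by simp
  have "Re (Q * cnj P) = (cmod P)^2 * Re W"
    unfolding QW cmod_power2 by (simp add: algebra_simps power2_eq_square)
  then have a1: "Re W \<ge> 1" using h P by (smt (verit, best) mult_le_cancel_left1 zero_less_norm_iff zero_less_power)
  define a where "a = Re W"
  define b where "b = Im W"
  define t where "t = (b + sqrt (b^2 + 4 * (a - 1))) / 2"
  have disc: "b^2 + 4 * (a - 1) \<ge> 0" using a1 a_def by (smt (verit) zero_le_power2)
  have teq: "t^2 - b * t + 1 - a = 0"
  proof -
    have "(sqrt (b^2 + 4 * (a - 1)))^2 = b^2 + 4 * (a - 1)" using disc by simp
    then show ?thesis unfolding t_def by (simp add: power2_eq_square field_simps) 
  qed
  have W1: "W = (1 + \<i> * of_real t) * (1 + \<i> * of_real (b - t))"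
    using teq by (simp add: complex_eq_iff a_def b_def power2_eq_square algebra_simps)
  have R0: "P * (1 + \<i> * of_real t) \<noteq> 0"
    using P one_i_nz by simp
  have "F Q = F (P * (1 + \<i> * of_real t) * (1 + \<i> * of_real (b - t)))"
    using QW W1 by (simp add: mult.assoc)
  also have "\<dots> \<le> F (P * (1 + \<i> * of_real t))" by (rule desc[OF R0])
  also have "\<dots> \<le> F P" by (rule desc[OF P])
  finally show ?thesis .
qed


lemma chain: assumes "P \<noteq> 0" shows "F (P * (1 + \<i> * of_real t) ^ j) \<le> F P"
proof (induction j)
  case 0 then show ?case by simp
next
  case (Suc j)
  have nz: "P * (1 + \<i> * of_real t) ^ j \<noteq> 0" using assms one_i_nz by simp
  have "F (P * (1 + \<i> * of_real t) ^ Suc j) = F (P * (1 + \<i> * of_real t) ^ j * (1 + \<i> * of_real t))"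
    by (simp add: ac_simps)
  also have "\<dots> \<le> F (P * (1 + \<i> * of_real t) ^ j)" by (rule desc[OF nz])
  finally show ?case using Suc by simp
qed

lemma mono: assumes lt: "cmod P < cmod Q" shows "F Q \<le> F P"
proof (cases "P = 0")
  case True then show ?thesis using le1 zero by simp
next
  case P: False
  define W where "W = Q / P"
  define \<mu> where "\<mu> = cmod W"
  define \<theta> where "\<theta> = Arg W"
  have QW: "Q = P * W" using P W_def by simp
  have mu1: "\<mu> > 1" using lt P unfolding \<mu>_def W_def by (simp add: norm_divide)
  have Wp: "W = of_real \<mu> * cis \<theta>" unfolding \<mu>_def \<theta>_def
    by (metis rcis_cmod_Arg rcis_def)
  have thb: "\<bar>\<theta>\<bar> \<le> pi" using Arg_bounded[of W] unfolding \<theta>_def by auto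
  define k :: nat where "k = max 4 (nat \<lceil>8 * \<mu> / (\<mu> - 1)\<rceil>)"
  have k4: "k \<ge> 4" unfolding k_def by simp
  have kb: "real k \<ge> 8 * \<mu> / (\<mu> - 1)"
  proof -
    have "8 * \<mu> / (\<mu> - 1) \<le> real (nat \<lceil>8 * \<mu> / (\<mu> - 1)\<rceil>)" by (rule real_nat_ceiling_ge)
    also have "\<dots> \<le> real k" unfolding k_def by simp
    finally show ?thesis .
  qed
  have kpos: "real k > 0" using k4 by simp
  define D where "D = \<theta> / real k"
  have Db: "\<bar>D\<bar> \<le> pi / 4"
  proof -
    have "\<bar>D\<bar> = \<bar>\<theta>\<bar> / real k" unfolding D_def by simp
    also have "\<dots> \<le> pi / real k" using thb kpos by (intro divide_right_mono) auto
    also have "\<dots> \<le> pi / 4" using k4 pi_gt_zero by (intro divide_left_mono) auto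
    finally show ?thesis .
  qed
  have D1: "\<bar>D\<bar> \<le> 1" using Db pi_less_4 by linarith
  have "D \<le> \<bar>D\<bar>" "- D \<le> \<bar>D\<bar>" by auto
  then have cpos: "cos D > 0" using Db pi_gt_zero by (intro cos_gt_zero_pi) linarith+
  define C where "C = cos D ^ k"
  have Cpos: "C > 0" unfolding C_def using cpos by simp
  have Clb: "C \<ge> 1 - real k * D^2 / 2" unfolding C_def by (rule cos_pow_lb[OF D1])
  have "real k * D^2 / 2 = \<theta>^2 / (2 * real k)" unfolding D_def using kpos
    by (simp add: power2_eq_square field_simps)
  also have "\<dots> \<le> pi^2 / (2 * real k)"
    using thb kpos abs_le_square_iff[of \<theta> pi] pi_gt_zero by (intro divide_right_mono) auto
  also have "\<dots> \<le> 16 / (2 * real k)"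
    using kpos pi_less_4 pi_gt_zero by (intro divide_right_mono) (auto intro!: power_mono[of pi 4 2, simplified])
  also have "\<dots> \<le> (\<mu> - 1) / \<mu>"
  proof -
    have "8 * \<mu> \<le> real k * (\<mu> - 1)" using kb mu1 by (simp add: divide_le_eq)
    then show ?thesis using mu1 kpos by (simp add: divide_le_eq le_divide_eq mult.commute)
  qed
  finally have kd: "real k * D^2 / 2 \<le> (\<mu> - 1) / \<mu>" .
  have muC: "\<mu> * C \<ge> 1"
  proof -
    have "C \<ge> 1 - (\<mu> - 1) / \<mu>" using Clb kd by linarith
    then have "\<mu> * C \<ge> \<mu> * (1 - (\<mu> - 1) / \<mu>)" using mu1 by (intro mult_left_mono) auto
    also have "\<mu> * (1 - (\<mu> - 1) / \<mu>) = 1" using mu1 by (simp add: field_simps)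
    finally show ?thesis .
  qed
  define t where "t = tan D"
  have base: "1 + \<i> * of_real t = cis D / of_real (cos D)"
    using cpos unfolding t_def by (simp add: complex_eq_iff tan_def cis.sel)
  have pw: "(1 + \<i> * of_real t) ^ k = cis \<theta> / of_real C"
    unfolding base C_def power_divide Complex.DeMoivre D_def using kpos by simp
  define Pk where "Pk = P * (1 + \<i> * of_real t) ^ k"
  have PkP: "F Pk \<le> F P" unfolding Pk_def by (rule chain[OF P])
  have Pk0: "Pk \<noteq> 0" unfolding Pk_def using P one_i_nz by simp
  have cc: "cis \<theta> * cnj (cis \<theta>) = 1" by (simp add: complex_eq_iff power2_eq_square[symmetric])
  have "Re (Q * cnj Pk) = (cmod P)^2 * \<mu> / C"
  proof -
    have "Q * cnj Pk = (P * cnj P) * of_real \<mu> * (cis \<theta> * cnj (cis \<theta>)) / of_real C"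
      unfolding Pk_def pw QW Wp by (simp add: field_simps)
    also have "\<dots> = of_real ((cmod P)^2 * \<mu> / C)" unfolding cc complex_mult_cnj by (simp add: cmod_power2)
    finally show ?thesis by simp
  qed
  moreover have "(cmod Pk)^2 = (cmod P)^2 / C^2"
    unfolding Pk_def pw using Cpos by (simp add: norm_mult norm_divide power_divide)
  moreover have "(cmod P)^2 / C^2 \<le> (cmod P)^2 * \<mu> / C"
    using muC Cpos P by (simp add: field_simps power2_eq_square)
  ultimately have "F Q \<le> F Pk" using Pk0 by (intro m2) auto
  then show ?thesis using PkP by simp
qed

lemma half_aux: assumes Z1: "cmod Z = 1" shows "F Z \<le> 1/2"
proof (rule ccontr)
  assume "\<not> F Z \<le> 1/2"
  define \<delta> where "\<delta> = F Z - 1/2"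
  have dpos: "\<delta> > 0" using \<open>\<not> F Z \<le> 1/2\<close> \<delta>_def by simp
  have Z0: "Z \<noteq> 0" using Z1 by auto
  have mZ0: "- Z \<noteq> 0" using Z0 by simp
  have FmZ: "F (- Z) = 1 - F Z" using compl[OF Z0] Z1 by simp
  have nZ: "cmod (W * (1 + \<i> * complex_of_real r)) = sqrt (1 + r^2)" if "cmod W = 1" for W r
    using that by (simp add: norm_mult cmod_1i)
  have nZ': "cmod (W * (1 - \<i> * complex_of_real r)) = sqrt (1 + r^2)" if "cmod W = 1" for W r
    using that by (simp add: norm_mult cmod_1mi)
  have jump: "F (Z * (1 + \<i> * of_real t)) \<ge> 2 * \<delta> + F (- Z * (1 + \<i> * of_real s))"
    if t0: "0 < t" and ts: "t < s" for t s
  proof -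
    have s0: "s \<noteq> 0" "t \<noteq> 0" using t0 ts by auto
    have e1: "F Z = F (Z * (1 + \<i> * of_real t)) + F (Z * (1 - \<i> * of_real (2 / t)))"
      using splitF[OF Z0 s0(2)] Z1 by simp
    have e2: "F (- Z) = F (- Z * (1 + \<i> * of_real s)) + F (- Z * (1 - \<i> * of_real (2 / s)))"
      using splitF[OF mZ0 s0(1)] Z1 by simp
    have "2 / s < 2 / t" using t0 ts by (simp add: frac_less2)
    then have "(2/s)^2 < (2/t)^2" using t0 ts by (intro power_strict_mono) auto
    then have "sqrt (1 + (2/s)^2) < sqrt (1 + (2/t)^2)" by simp
    moreover have "cmod (- Z) = 1" using Z1 by simp
    ultimately have "cmod (- Z * (1 - \<i> * of_real (2 / s))) < cmod (Z * (1 - \<i> * of_real (2 / t)))"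
      by (simp only: nZ'[OF Z1] nZ'[OF \<open>cmod (- Z) = 1\<close>])
    then have "F (Z * (1 - \<i> * of_real (2 / t))) \<le> F (- Z * (1 - \<i> * of_real (2 / s)))"
      by (rule mono)
    then show ?thesis using e1 e2 FmZ \<delta>_def by linarith
  qed
  define a where "a j = F (Z * (1 + \<i> * of_real (2 * real j + 1)))" for j :: nat
  have step: "a j \<ge> 2 * \<delta> + a (Suc j)" for j
  proof -
    have "a j \<ge> 2 * \<delta> + F (- Z * (1 + \<i> * of_real (2 * real j + 2)))"
      unfolding a_def by (rule jump) auto
    moreover have "F (Z * (1 + \<i> * of_real (2 * real (Suc j) + 1))) \<le> F (- Z * (1 + \<i> * of_real (2 * real j + 2)))"
    proof (rule mono)
      have "(2 * real j + 2)^2 < (2 * real (Suc j) + 1)^2" by (intro power_strict_mono) auto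
      then have "sqrt (1 + (2 * real j + 2)^2) < sqrt (1 + (2 * real (Suc j) + 1)^2)" by simp
      moreover have "cmod (- Z) = 1" using Z1 by simp
      ultimately show "cmod (- Z * (1 + \<i> * of_real (2 * real j + 2))) < cmod (Z * (1 + \<i> * of_real (2 * real (Suc j) + 1)))"
        by (simp only: nZ[OF Z1] nZ[OF \<open>cmod (- Z) = 1\<close>])
    qed
    ultimately show ?thesis unfolding a_def by linarith
  qed
  have ind: "a 0 \<ge> 2 * real n * \<delta> + a n" for n
  proof (induction n)
    case 0 then show ?case by simp
  next
    case (Suc n) then show ?case using step[of n] by (simp add: algebra_simps)
  qed
  obtain n :: nat where n: "1 / (2 * \<delta>) < real n" using reals_Archimedean2 by blast
  have "a 0 \<le> 1" unfolding a_def by (rule le1)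
  moreover have "a n \<ge> 0" unfolding a_def by (rule nonneg)
  moreover have "2 * real n * \<delta> > 1" using n dpos by (simp add: divide_less_eq algebra_simps)
  ultimately show False using ind[of n] by linarith
qed

lemma half: assumes Z1: "cmod Z = 1" shows "F Z = 1/2"
proof -
  have Z0: "Z \<noteq> 0" using Z1 by auto
  have "F Z + F (- Z) = 1" using compl[OF Z0] Z1 by simp
  moreover have "F Z \<le> 1/2" by (rule half_aux[OF Z1])
  moreover have "F (- Z) \<le> 1/2" by (rule half_aux) (use Z1 in simp)
  ultimately show ?thesis by linarith
qed

lemma dbl: assumes s0: "\<sigma> \<ge> 0" and h: "\<And>Q. (cmod Q)^2 > \<sigma> \<Longrightarrow> F Q = 0"
  and q: "(cmod Q)^2 > \<sigma> / 2" shows "F Q = 0"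
proof -
  define \<rho> where "\<rho> = (cmod Q)^2"
  have rpos: "\<rho> > 0" using q s0 \<rho>_def by linarith
  have Q0: "Q \<noteq> 0" using rpos \<rho>_def by auto
  define t where "t = sqrt ((1 + \<rho>) / \<rho>)"
  have tpos: "t > 0" unfolding t_def using rpos by simp
  have t2: "t^2 = (1 + \<rho>) / \<rho>" unfolding t_def using rpos by simp
  have ct: "(1 + (cmod Q)^2) / ((cmod Q)^2 * t) = t"
    using t2 tpos rpos unfolding \<rho>_def[symmetric] by (simp add: field_simps power2_eq_square)
  have e: "F Q = F (Q * (1 + \<i> * of_real t)) + F (Q * (1 - \<i> * of_real t))"
    using splitF[OF Q0, of t] tpos ct by simp
  have "(cmod Q * sqrt (1 + t^2))^2 = 2 * \<rho> + 1"
    using t2 rpos unfolding power_mult_distrib \<rho>_def by (simp add: field_simps)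
  then have n1: "(cmod (Q * (1 + \<i> * of_real t)))^2 = 2 * \<rho> + 1"
    and n2: "(cmod (Q * (1 - \<i> * of_real t)))^2 = 2 * \<rho> + 1"
    by (simp_all only: norm_mult cmod_1i cmod_1mi)
  have "F (Q * (1 + \<i> * of_real t)) = 0" by (rule h) (use n1 q \<rho>_def in linarith)
  moreover have "F (Q * (1 - \<i> * of_real t)) = 0" by (rule h) (use n2 q \<rho>_def in linarith)
  ultimately show ?thesis using e by simp
qed

lemma pos: "F Q > 0"
proof (rule ccontr)
  assume "\<not> F Q > 0"
  then have FQ: "F Q = 0" using nonneg[of Q] by simp
  have Q0: "Q \<noteq> 0" using FQ zero by auto
  define \<sigma> where "\<sigma> = (cmod Q)^2"
  have spos: "\<sigma> > 0" using Q0 \<sigma>_def by simp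
  have base: "F Q' = 0" if "(cmod Q')^2 > \<sigma>" for Q'
  proof -
    have "cmod Q < cmod Q'" using that \<sigma>_def by (smt (verit) norm_ge_zero power_mono)
    then have "F Q' \<le> F Q" by (rule mono)
    then show ?thesis using FQ nonneg[of Q'] by simp
  qed
  have ind: "\<forall>Q'. (cmod Q')^2 > \<sigma> / 2^n \<longrightarrow> F Q' = 0" for n :: nat
  proof (induction n)
    case 0 then show ?case using base by simp
  next
    case (Suc n)
    have "F Q' = 0" if "(cmod Q')^2 > \<sigma> / 2^(Suc n)" for Q'
    proof (rule dbl[of "\<sigma> / 2^n"])
      show "\<sigma> / 2^n \<ge> 0" using spos by simp
      show "F Q'' = 0" if "(cmod Q'')^2 > \<sigma> / 2^n" for Q'' using Suc that by blast
      show "(cmod Q')^2 > \<sigma> / 2^n / 2" using that by simp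
    qed
    then show ?case by blast
  qed
  obtain n :: nat where n: "\<sigma> < 2^n" using real_arch_pow[of 2 \<sigma>] by auto
  have "(cmod (1::complex))^2 > \<sigma> / 2^n" using n by simp
  then have "F 1 = 0" using ind by blast
  moreover have "F 1 = 1/2" by (rule half) simp
  ultimately show False by simp
qed

end



lemma span3_univ:
  fixes w1 w2 w3 :: "real \<times> complex"
  assumes nz: "w1 \<noteq> 0" "w2 \<noteq> 0" "w3 \<noteq> 0"
    and o: "w1 \<bullet> w2 = 0" "w1 \<bullet> w3 = 0" "w2 \<bullet> w3 = 0"
  shows "span {w1, w2, w3} = UNIV"
proof -
  have d: "w1 \<noteq> w2" "w1 \<noteq> w3" "w2 \<noteq> w3" using nz o by (auto simp: inner_eq_zero_iff)
  have po: "pairwise orthogonal {w1, w2, w3}"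
    using o by (auto simp: pairwise_def orthogonal_def inner_commute)
  have ind: "independent {w1, w2, w3}"
    by (rule pairwise_orthogonal_independent[OF po]) (use nz in auto)
  have c: "card {w1, w2, w3} = 3" using d by simp
  have "UNIV \<subseteq> span {w1, w2, w3}"
    by (rule card_ge_dim_independent[OF _ ind]) (use c in auto)
  then show ?thesis by auto
qed

lemma orth_span_iff:
  fixes S T :: "'a::real_inner set"
  shows "orth_sub (span S) (span T) \<longleftrightarrow> (\<forall>s\<in>S. \<forall>t\<in>T. s \<bullet> t = 0)"
proof
  assume "orth_sub (span S) (span T)"
  then show "\<forall>s\<in>S. \<forall>t\<in>T. s \<bullet> t = 0" unfolding orth_sub_def using span_base by blast
next
  assume h: "\<forall>s\<in>S. \<forall>t\<in>T. s \<bullet> t = 0"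
  have "u \<bullet> w = 0" if u: "u \<in> span S" and w: "w \<in> span T" for u w
  proof -
    have "orthogonal t u" if "t \<in> T" for t
      using orthogonal_to_span[OF u, of t] h that by (auto simp: orthogonal_def inner_commute)
    then have "orthogonal u w" using orthogonal_to_span[OF w, of u] by (auto simp: orthogonal_def inner_commute)
    then show ?thesis by (simp add: orthogonal_def)
  qed
  then show "orth_sub (span S) (span T)" unfolding orth_sub_def by blast
qed

lemma orth_sub_sym: "orth_sub a b \<Longrightarrow> orth_sub b a"
  unfolding orth_sub_def by (metis inner_commute)

definition porth :: "'a::real_inner set set \<Rightarrow> bool" where
  "porth G \<longleftrightarrow> (\<forall>a\<in>G. \<forall>b\<in>G. a \<noteq> b \<longrightarrow> orth_sub a b)"

lemma extend_max:
  assumes TA: "T \<subseteq> A" and pT: "porth T"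
  shows "\<exists>M. T \<subseteq> M \<and> max_orth_family A M"
proof -
  define C where "C = {G. T \<subseteq> G \<and> G \<subseteq> A \<and> porth G}"
  have "\<forall>Ch\<in>chains C. \<exists>U\<in>C. \<forall>X\<in>Ch. X \<subseteq> U"
  proof
    fix Ch assume Ch: "Ch \<in> chains C"
    show "\<exists>U\<in>C. \<forall>X\<in>Ch. X \<subseteq> U"
    proof (cases "Ch = {}")
      case True then show ?thesis using TA pT C_def by auto
    next
      case False
      have sub: "Ch \<subseteq> C" and ch: "\<forall>X\<in>Ch. \<forall>Y\<in>Ch. X \<subseteq> Y \<or> Y \<subseteq> X"
        using Ch unfolding chains_def chain_subset_def by auto
      have "porth (\<Union>Ch)"
        unfolding porth_def
      proof (intro ballI impI)
        fix a b assume a: "a \<in> \<Union>Ch" and b: "b \<in> \<Union>Ch" and ab: "a \<noteq> b"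
        obtain X Y where X: "X \<in> Ch" "a \<in> X" and Y: "Y \<in> Ch" "b \<in> Y" using a b by auto
        show "orth_sub a b"
        proof (cases "X \<subseteq> Y")
          case True
          then show ?thesis using sub X Y ab unfolding C_def porth_def by blast
        next
          case False
          then have "Y \<subseteq> X" using ch X Y by blast
          then show ?thesis using sub X Y ab unfolding C_def porth_def by blast
        qed
      qed
      moreover have "T \<subseteq> \<Union>Ch" using False sub C_def by auto
      moreover have "\<Union>Ch \<subseteq> A" using sub C_def by auto
      ultimately show ?thesis unfolding C_def by blast
    qed
  qed
  then obtain M where MC: "M \<in> C" and Mmax: "\<forall>X\<in>C. M \<subseteq> X \<longrightarrow> X = M"
    using Zorn_Lemma2[of C] by blast
  have "max_orth_family A M"
    unfolding max_orth_family_def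
  proof (intro conjI)
    show "M \<subseteq> A" using MC C_def by auto
    show "\<forall>x\<in>M. \<forall>y\<in>M. x \<noteq> y \<longrightarrow> orth_sub x y" using MC C_def porth_def by auto
    show "\<not> (\<exists>z\<in>A. z \<notin> M \<and> (\<forall>x\<in>M. orth_sub z x))"
    proof
      assume "\<exists>z\<in>A. z \<notin> M \<and> (\<forall>x\<in>M. orth_sub z x)"
      then obtain z where z: "z \<in> A" "z \<notin> M" "\<forall>x\<in>M. orth_sub z x" by blast
      have "insert z M \<in> C"
        using MC z unfolding C_def porth_def by (auto intro: orth_sub_sym)
      then have "insert z M = M" using Mmax by blast
      then show False using z by blast
    qed
  qed
  then show ?thesis using MC C_def by blast
qed




locale hs =
  fixes A :: "'a::real_inner set set" and P :: "'a set \<Rightarrow> real" and J :: "'a \<Rightarrow> 'a" and x :: "'a set"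
  assumes linJ: "linear J" and isoJ: "\<And>a b. J a \<bullet> J b = a \<bullet> b"
  and A_eq: "A = {span {v, J v} | v. v \<noteq> 0}"
  and state: "is_state A P" and xA: "x \<in> A" and Px: "P x = 1"
begin

lemma nonnegA: "z \<in> A \<Longrightarrow> P z \<ge> 0"
  using state unfolding is_state_def by auto

lemma hassum: "max_orth_family A M \<Longrightarrow> (P has_sum 1) M"
  using state unfolding is_state_def by auto

lemma not_self_orth: assumes "z \<in> A" shows "\<not> orth_sub z z"
proof
  assume o: "orth_sub z z"
  obtain v where v: "v \<noteq> 0" "z = span {v, J v}" using assms A_eq by auto
  have "v \<in> z" using v by (simp add: span_base)
  then have "v \<bullet> v = 0" using o unfolding orth_sub_def by blast
  then show False using v by simp
qed

lemma sum_le1: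
  assumes M: "max_orth_family A M" and S: "S \<subseteq> M" "finite S"
  shows "sum P S \<le> 1"
proof -
  have MA: "M \<subseteq> A" using M unfolding max_orth_family_def by auto
  have "(P has_sum sum P S) S" using S(2) by (rule has_sum_finite)
  moreover have "(P has_sum 1) M" by (rule hassum[OF M])
  ultimately show ?thesis
    by (rule has_sum_mono_neutral) (use S MA nonnegA in auto)
qed

lemma zero_orth: assumes w: "w \<in> A" and o: "orth_sub w x" shows "P w = 0"
proof -
  have wx: "w \<noteq> x" using o not_self_orth[OF w] by auto
  have "porth {x, w}" unfolding porth_def using o orth_sub_sym by auto
  then obtain M where M: "{x, w} \<subseteq> M" "max_orth_family A M"
    using extend_max[of "{x, w}" A] w xA by auto
  have "sum P {x, w} \<le> 1" by (rule sum_le1[OF M(2) M(1)]) simp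
  then have "P w \<le> 0" using wx Px by simp
  then show ?thesis using nonnegA[OF w] by simp
qed

lemma sum_eq1:
  assumes TA: "T \<subseteq> A" and fT: "finite T" and pT: "porth T"
    and cov: "\<And>z. z \<in> A \<Longrightarrow> (\<forall>t\<in>T. orth_sub z t) \<Longrightarrow> orth_sub z x"
  shows "sum P T = 1"
proof -
  obtain M where M: "T \<subseteq> M" "max_orth_family A M" using extend_max[OF TA pT] by auto
  have MA: "M \<subseteq> A" and pM: "\<forall>a\<in>M. \<forall>b\<in>M. a \<noteq> b \<longrightarrow> orth_sub a b"
    using M(2) unfolding max_orth_family_def by auto
  have z0: "P m = 0" if "m \<in> M - T" for m
  proof (rule zero_orth)
    show "m \<in> A" using that MA by auto
    show "orth_sub m x"
    proof (rule cov)
      show "m \<in> A" using that MA by auto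
      show "\<forall>t\<in>T. orth_sub m t" using that M(1) pM by (metis DiffE subsetD)
    qed
  qed
  have "(P has_sum 1) M" by (rule hassum[OF M(2)])
  then have "(P has_sum 1) T"
    using has_sum_cong_neutral[of T M P P 1] z0 M(1) by auto
  moreover have "(P has_sum sum P T) T" using fT by (rule has_sum_finite)
  ultimately show ?thesis using has_sum_unique by metis
qed

end

locale hsf = hs A P J x for A :: "'a::real_inner set set" and P J x +
  fixes n e2 e3 :: 'a and c :: real
  assumes nn: "n \<bullet> n = 1" and ee2: "e2 \<bullet> e2 = 1" and ee3: "e3 \<bullet> e3 = 1"
  and ne2: "n \<bullet> e2 = 0" and ne3: "n \<bullet> e3 = 0" and e23: "e2 \<bullet> e3 = 0"
  and cn: "n \<bullet> J n = c" and c2: "e2 \<bullet> J e2 = c" and c3: "e3 \<bullet> J e3 = c"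
  and x12: "n \<bullet> J e2 = 0" and x13: "n \<bullet> J e3 = 0" and x21: "e2 \<bullet> J n = 0"
  and x23: "e2 \<bullet> J e3 = 0" and x31: "e3 \<bullet> J n = 0" and x32: "e3 \<bullet> J e2 = 0"
  and x_eq: "x = span {n, J n}"
begin

definition iv :: "real \<times> complex \<Rightarrow> 'a" where
  "iv w = fst w *\<^sub>R n + Re (snd w) *\<^sub>R e2 + Im (snd w) *\<^sub>R e3"

definition Kt :: "real \<times> complex \<Rightarrow> 'a set" where
  "Kt w = span {iv w, J (iv w)}"

lemma lin_iv: "linear iv"
  unfolding iv_def by (intro linearI) (auto simp: algebra_simps scaleR_add_left)

lemma iv_inner: "iv w \<bullet> iv w' = w \<bullet> w'"
  unfolding iv_def
  by (simp add: inner_add_left inner_add_right ne2 ne3 e23 nn ee2 ee3 inner_commute[of e2 n]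
      inner_commute[of e3 n] inner_commute[of e3 e2] prod_eq_iff inner_complex_def case_prod_beta inner_prod_def inner_real_def algebra_simps)

lemma J_iv: "J (iv w) = fst w *\<^sub>R J n + Re (snd w) *\<^sub>R J e2 + Im (snd w) *\<^sub>R J e3"
  unfolding iv_def using linJ by (simp add: linear_add linear_scale)

lemma iv_Jinner: "iv w \<bullet> J (iv w') = c * (w \<bullet> w')"
  unfolding J_iv unfolding iv_def
  by (simp add: inner_add_left inner_add_right cn c2 c3 x12 x13 x21 x23 x31 x32
      inner_complex_def case_prod_beta algebra_simps inner_prod_def inner_real_def)

lemma Kt_orth: assumes "w \<bullet> w' = 0" shows "orth_sub (Kt w) (Kt w')"
  unfolding Kt_def orth_span_iff
  using assms iv_inner iv_Jinner[of w w'] iv_Jinner[of w' w] isoJ inner_commute[of "J (iv w)" "iv w'"]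
  by (auto simp: inner_commute[of w' w])

lemma iv_nz: "w \<noteq> 0 \<Longrightarrow> iv w \<noteq> 0"
  using iv_inner[of w w] by auto

lemma Kt_A: "w \<noteq> 0 \<Longrightarrow> Kt w \<in> A"
  unfolding A_eq Kt_def using iv_nz by blast

lemma iv_n: "iv (1, 0) = n" unfolding iv_def by simp

lemma x_Kt: "x = Kt (1, 0)" unfolding Kt_def iv_n x_eq ..

lemma iv_in_Kt: "iv w \<in> Kt w" unfolding Kt_def by (simp add: span_base)

lemma Kt_ne: assumes "w \<noteq> 0" "w \<bullet> w' = 0" shows "Kt w \<noteq> Kt w'"
proof
  assume eq: "Kt w = Kt w'"
  have "orth_sub (Kt w) (Kt w)" using Kt_orth[OF assms(2)] eq by simp
  then show False using not_self_orth Kt_A[OF assms(1)] by blast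
qed

lemma triple:
  assumes nz: "w1 \<noteq> 0" "w2 \<noteq> 0" "w3 \<noteq> 0"
    and o: "w1 \<bullet> w2 = 0" "w1 \<bullet> w3 = 0" "w2 \<bullet> w3 = 0"
  shows "P (Kt w1) + P (Kt w2) + P (Kt w3) = 1"
proof -
  have o': "w2 \<bullet> w1 = 0" "w3 \<bullet> w1 = 0" "w3 \<bullet> w2 = 0" using o by (simp_all add: inner_commute)
  have d: "Kt w1 \<noteq> Kt w2" "Kt w1 \<noteq> Kt w3" "Kt w2 \<noteq> Kt w3"
    using Kt_ne nz o by auto
  have sp: "span {w1, w2, w3} = UNIV" by (rule span3_univ[OF nz o])
  have "sum P {Kt w1, Kt w2, Kt w3} = 1"
  proof (rule sum_eq1)
    show "{Kt w1, Kt w2, Kt w3} \<subseteq> A" using Kt_A nz by auto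
    show "finite {Kt w1, Kt w2, Kt w3}" by simp
    show "porth {Kt w1, Kt w2, Kt w3}" unfolding porth_def using Kt_orth o o' by auto
    fix z assume zA: "z \<in> A" and zo: "\<forall>t\<in>{Kt w1, Kt w2, Kt w3}. orth_sub z t"
    have zo': "v \<bullet> iv w = 0 \<and> v \<bullet> J (iv w) = 0" if "v \<in> z" "w \<in> {w1, w2, w3}" for v w
      using zo that unfolding Kt_def orth_sub_def by (auto simp: span_base)
    have "n \<in> span (iv ` {w1, w2, w3})"
      using iv_n span_linear_image[OF lin_iv, of "{w1,w2,w3}"] sp by (metis UNIV_I image_eqI)
    moreover have "J n \<in> span ((J \<circ> iv) ` {w1, w2, w3})"
      using iv_n span_linear_image[OF linear_compose[OF lin_iv linJ], of "{w1,w2,w3}"] sp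
      by (metis UNIV_I image_eqI comp_apply)
    ultimately have nv: "v \<bullet> n = 0 \<and> v \<bullet> J n = 0" if "v \<in> z" for v
    proof -
      have z1: "v \<bullet> iv w1 = 0 \<and> v \<bullet> J (iv w1) = 0" using zo'[OF \<open>v \<in> z\<close>, of w1] by simp
      have z2: "v \<bullet> iv w2 = 0 \<and> v \<bullet> J (iv w2) = 0" using zo'[OF \<open>v \<in> z\<close>, of w2] by simp
      have z3: "v \<bullet> iv w3 = 0 \<and> v \<bullet> J (iv w3) = 0" using zo'[OF \<open>v \<in> z\<close>, of w3] by simp
      have h1: "orthogonal v y" if "y \<in> iv ` {w1, w2, w3}" for y
        using that z1 z2 z3 unfolding orthogonal_def by blast
      have h2: "orthogonal v y" if "y \<in> (J \<circ> iv) ` {w1, w2, w3}" for y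
        using that z1 z2 z3 unfolding orthogonal_def by auto
      show ?thesis
        using orthogonal_to_span[of n "iv ` {w1, w2, w3}" v, OF _ h1]
          orthogonal_to_span[of "J n" "(J \<circ> iv) ` {w1, w2, w3}" v, OF _ h2]
          \<open>n \<in> span (iv ` {w1, w2, w3})\<close> \<open>J n \<in> span ((J \<circ> iv) ` {w1, w2, w3})\<close>
        by (auto simp: orthogonal_def)
    qed
    show "orth_sub z x" unfolding x_eq orth_sub_def
    proof (intro ballI)
      fix v u assume v: "v \<in> z" and u: "u \<in> span {n, J n}"
      have "orthogonal v y" if "y \<in> {n, J n}" for y using that nv[OF v] by (auto simp: orthogonal_def)
      then have "orthogonal v u" using orthogonal_to_span[OF u] by blast
      then show "v \<bullet> u = 0" by (simp add: orthogonal_def)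
    qed
  qed
  then show ?thesis using d by (simp add: add.assoc)
qed

end



lemma inner_cx: "(a::complex) \<bullet> b = Re a * Re b + Im a * Im b"
  by (simp add: inner_complex_def)

lemma inner_div: "(a::complex) \<bullet> (b / of_real r) = (a \<bullet> b) / r"
  unfolding inner_cx by (simp add: add_divide_distrib)

lemma inner_selfc: "(a::complex) \<bullet> a = (cmod a)^2"
  by (simp add: power2_norm_eq_inner)

lemma inner_rot1: "(Q * (1 + \<i> * of_real t)) \<bullet> Q = (cmod Q)^2"
  unfolding inner_cx cmod_power2 by (simp add: algebra_simps power2_eq_square)

lemma inner_rot2: "(Q * (1 - \<i> * of_real t)) \<bullet> Q = (cmod Q)^2"
  unfolding inner_cx cmod_power2 by (simp add: algebra_simps power2_eq_square)

lemma inner_iQ: "(\<i> * Q) \<bullet> Q = 0" "Q \<bullet> (\<i> * Q) = 0"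
  unfolding inner_cx by (simp_all add: algebra_simps)

context hsf begin

definition Ft :: "complex \<Rightarrow> real" where "Ft Q = P (Kt (1, Q))"

lemma eq0: assumes "Q \<noteq> 0" shows "P (Kt (0, Q)) = 0"
proof (rule zero_orth)
  show "Kt (0, Q) \<in> A" using assms by (intro Kt_A) (simp add: zero_prod_def)
  show "orth_sub (Kt (0, Q)) x" unfolding x_Kt by (rule Kt_orth) simp
qed

lemma tri1:
  assumes o: "1 + Q1 \<bullet> Q2 = 0" "1 + Q1 \<bullet> Q3 = 0" "1 + Q2 \<bullet> Q3 = 0"
  shows "Ft Q1 + Ft Q2 + Ft Q3 = 1"
  unfolding Ft_def by (rule triple) (use o in \<open>auto simp: zero_prod_def\<close>)

lemma tri0:
  assumes o: "Q1 \<bullet> Q2 = 0" "1 + Q1 \<bullet> Q3 = 0" "Q2 \<bullet> Q3 = 0" and nz: "Q2 \<noteq> 0"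
  shows "Ft Q1 + Ft Q3 = 1"
proof -
  have "P (Kt (1, Q1)) + P (Kt (0, Q2)) + P (Kt (1, Q3)) = 1"
    by (rule triple) (use o nz in \<open>auto simp: zero_prod_def\<close>)
  then show ?thesis using eq0[OF nz] unfolding Ft_def by simp
qed

lemma Ft_gfr: "gfr Ft"
proof
  fix Q show "Ft Q \<ge> 0" unfolding Ft_def by (rule nonnegA, rule Kt_A) (simp add: zero_prod_def)
next
  show "Ft 0 = 1" unfolding Ft_def using x_Kt Px by simp
next
  fix Z :: complex assume Z: "Z \<noteq> 0"
  have m: "(cmod Z)^2 = Re Z ^ 2 + Im Z ^ 2" by (simp add: cmod_power2)
  have mp: "(cmod Z)^2 > 0" using Z by simp
  show "Ft Z + Ft (- Z / of_real ((cmod Z)^2)) = 1"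
  proof (rule tri0[of _ "\<i> * Z"])
    show "1 + Z \<bullet> (- Z / of_real ((cmod Z)^2)) = 0"
      using mp by (simp only: inner_div inner_minus_right inner_selfc) simp
    show "Z \<bullet> (\<i> * Z) = 0" by (rule inner_iQ)
    show "(\<i> * Z) \<bullet> (- Z / of_real ((cmod Z)^2)) = 0"
      by (simp only: inner_div inner_minus_right inner_iQ)
    show "\<i> * Z \<noteq> 0" using Z by simp
  qed
next
  fix Q :: complex and t :: real assume Q: "Q \<noteq> 0" and t: "t \<noteq> 0"
  define u where "u = (1 + (cmod Q)^2) / ((cmod Q)^2 * t)"
  define Qs where "Qs = - Q / of_real ((cmod Q)^2)"
  have m: "(cmod Q)^2 = Re Q ^ 2 + Im Q ^ 2" by (simp add: cmod_power2)
  have mp: "(cmod Q)^2 > 0" using Q by simp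
  have a: "Ft Q + Ft Qs = 1"
  proof (rule tri0[of _ "\<i> * Q"])
    show "1 + Q \<bullet> Qs = 0"
      using mp unfolding Qs_def by (simp only: inner_div inner_minus_right inner_selfc) simp
    show "Q \<bullet> (\<i> * Q) = 0" by (rule inner_iQ)
    show "(\<i> * Q) \<bullet> Qs = 0"
      unfolding Qs_def by (simp only: inner_div inner_minus_right inner_iQ)
    show "\<i> * Q \<noteq> 0" using Q by simp
  qed
  have tu: "t * u = (1 + (cmod Q)^2) / (cmod Q)^2" unfolding u_def using t mp by (simp add: field_simps)
  have b: "Ft (Q * (1 + \<i> * of_real t)) + Ft (Q * (1 - \<i> * of_real u)) + Ft Qs = 1"
  proof (rule tri1)
    have "(Q * (1 + \<i> * of_real t)) \<bullet> (Q * (1 - \<i> * of_real u)) = (cmod Q)^2 * (1 - t * u)"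
      unfolding inner_cx m by (simp add: algebra_simps power2_eq_square)
    also have "\<dots> = -1" unfolding tu using mp by (simp add: field_simps)
    finally show "1 + (Q * (1 + \<i> * of_real t)) \<bullet> (Q * (1 - \<i> * of_real u)) = 0" by simp
    show "1 + (Q * (1 + \<i> * of_real t)) \<bullet> Qs = 0"
      using mp unfolding Qs_def by (simp only: inner_div inner_minus_right inner_rot1) simp
    show "1 + (Q * (1 - \<i> * of_real u)) \<bullet> Qs = 0"
      using mp unfolding Qs_def by (simp only: inner_div inner_minus_right inner_rot2) simp
  qed
  show "Ft Q = Ft (Q * (1 + \<i> * of_real t)) + Ft (Q * (1 - \<i> * of_real ((1 + (cmod Q)^2) / ((cmod Q)^2 * t))))"
    using a b unfolding u_def by linarith
qed

lemma Ft_pos: "Ft Q > 0"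
  using gfr.pos[OF Ft_gfr] .

lemma Ft_half: "cmod Z = 1 \<Longrightarrow> Ft Z = 1/2"
  using gfr.half[OF Ft_gfr] .

end



lemma span_pair_eq:
  assumes "u \<in> span {a, b}" "w \<in> span {a, b}" "a \<in> span {u, w}" "b \<in> span {u, w}"
  shows "span {u, w} = span {a, b}"
  using assms by (simp add: span_eq)

lemma span_pair_scale:
  fixes J :: "'a::real_vector \<Rightarrow> 'a"
  assumes lin: "linear J" and a: "a \<noteq> 0"
  shows "span {a *\<^sub>R u, J (a *\<^sub>R u)} = span {u, J u}"
proof -
  have Ja: "J (a *\<^sub>R u) = a *\<^sub>R J u" using lin by (simp add: linear_scale)
  show ?thesis unfolding Ja
  proof (rule span_pair_eq)
    show "a *\<^sub>R u \<in> span {u, J u}" by (intro span_scale span_base) simp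
    show "a *\<^sub>R J u \<in> span {u, J u}" by (intro span_scale span_base) simp
    have "u = (1/a) *\<^sub>R (a *\<^sub>R u)" using a by simp
    then show "u \<in> span {a *\<^sub>R u, a *\<^sub>R J u}" by (metis span_scale span_base insertI1)
    have "J u = (1/a) *\<^sub>R (a *\<^sub>R J u)" using a by simp
    then show "J u \<in> span {a *\<^sub>R u, a *\<^sub>R J u}" by (metis span_scale span_base insertI1 insertI2)
  qed
qed

lemma unit_orth_exists:
  fixes B :: "'a::real_inner set"
  assumes infdim: "\<not> (\<exists>B :: 'a set. finite B \<and> span B = UNIV)"
    and fB: "finite B" and nB: "\<And>b. b \<in> B \<Longrightarrow> b \<bullet> b = 1"
    and oB: "\<And>a b. a \<in> B \<Longrightarrow> b \<in> B \<Longrightarrow> a \<noteq> b \<Longrightarrow> a \<bullet> b = 0"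
  shows "\<exists>e. e \<bullet> e = 1 \<and> (\<forall>b\<in>B. e \<bullet> b = 0)"
proof -
  obtain v where v: "v \<notin> span B" using infdim fB by auto
  define e' where "e' = v - (\<Sum>b\<in>B. (b \<bullet> v) *\<^sub>R b)"
  have o: "e' \<bullet> b0 = 0" if b0: "b0 \<in> B" for b0
  proof -
    have "(\<Sum>b\<in>B. (b \<bullet> v) *\<^sub>R b) \<bullet> b0 = (\<Sum>b\<in>B. (b \<bullet> v) * (b \<bullet> b0))"
      by (simp add: inner_sum_left)
    also have "\<dots> = (b0 \<bullet> v) * (b0 \<bullet> b0)"
      by (rule sum.remove[OF fB b0, THEN trans]) (simp add: oB b0 sum.neutral)
    also have "\<dots> = v \<bullet> b0" using nB[OF b0] by (simp add: inner_commute)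
    finally show ?thesis unfolding e'_def by (simp add: inner_diff_left)
  qed
  have nz: "e' \<noteq> 0"
  proof
    assume "e' = 0"
    then have "v = (\<Sum>b\<in>B. (b \<bullet> v) *\<^sub>R b)" unfolding e'_def by simp
    moreover have "(\<Sum>b\<in>B. (b \<bullet> v) *\<^sub>R b) \<in> span B"
      by (intro span_sum span_scale span_base)
    ultimately show False using v by simp
  qed
  define e where "e = (1 / norm e') *\<^sub>R e'"
  have "e \<bullet> e = 1" unfolding e_def using nz
    by (simp add: power2_norm_eq_inner[symmetric] power2_eq_square)
  moreover have "\<forall>b\<in>B. e \<bullet> b = 0" unfolding e_def using o by simp
  ultimately show ?thesis by blast
qed

definition skew :: "('a::real_inner \<Rightarrow> 'a) \<Rightarrow> real \<Rightarrow> bool" where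
  "skew J c \<longleftrightarrow> (c = 1 \<and> (\<forall>v. J v = v)) \<or> (c = 0 \<and> (\<forall>v w. v \<bullet> J w = - (J v \<bullet> w)))"

lemma skew_vJv: assumes sk: "skew J c" shows "v \<bullet> J v = c * (v \<bullet> v)"
proof -
  from sk consider (r) "c = 1" "\<forall>v. J v = v" | (k) "c = 0" "\<forall>v w. v \<bullet> J w = - (J v \<bullet> w)"
    unfolding skew_def by blast
  then show ?thesis
  proof cases
    case r then show ?thesis by simp
  next
    case k
    have "v \<bullet> J v = - (J v \<bullet> v)" using k(2) by blast
    also have "J v \<bullet> v = v \<bullet> J v" by (rule inner_commute)
    finally show ?thesis using k(1) by simp
  qed
qed

lemma skew_swap: "skew J c \<Longrightarrow> u \<bullet> w = 0 \<Longrightarrow> J u \<bullet> w = 0 \<Longrightarrow> u \<bullet> J w = 0"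
  unfolding skew_def by auto

context hs begin

lemma frame_build:
  assumes sk: "skew J c" and infdim: "\<not> (\<exists>B :: 'a set. finite B \<and> span B = UNIV)"
    and nn: "n \<bullet> n = 1" and ee: "e2 \<bullet> e2 = 1" and ne: "n \<bullet> e2 = 0"
    and a1: "n \<bullet> J e2 = 0" and a2: "e2 \<bullet> J n = 0" and xe: "x = span {n, J n}"
  shows "\<exists>e3. hsf A P J x n e2 e3 c"
proof -
  have cn: "n \<bullet> J n = c" using skew_vJv[OF sk, of n] nn by simp
  have c2: "e2 \<bullet> J e2 = c" using skew_vJv[OF sk, of e2] ee by simp
  obtain e3 where e3: "e3 \<bullet> e3 = 1" "e3 \<bullet> n = 0" "e3 \<bullet> e2 = 0" "e3 \<bullet> J n = 0" "e3 \<bullet> J e2 = 0"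
  proof -
    have "\<exists>e. e \<bullet> e = 1 \<and> (\<forall>b\<in>{n, J n, e2, J e2}. e \<bullet> b = 0)"
    proof (cases "c = 1 \<and> (\<forall>v. J v = v)")
      case True
      then have "\<exists>e. e \<bullet> e = 1 \<and> (\<forall>b\<in>{n, e2}. e \<bullet> b = 0)"
        using nn ee ne by (intro unit_orth_exists[OF infdim]) (auto simp: inner_commute)
      then show ?thesis using True by auto
    next
      case False
      then have sk0: "c = 0" "\<And>v w. v \<bullet> J w = - (J v \<bullet> w)" using sk unfolding skew_def by auto
      have JJ: "J a \<bullet> J b = a \<bullet> b" for a b by (rule isoJ)
      show ?thesis
      proof (rule unit_orth_exists[OF infdim])
        show "finite {n, J n, e2, J e2}" by simp
        show "b \<bullet> b = 1" if "b \<in> {n, J n, e2, J e2}" for b using that nn ee JJ by auto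
        show "a \<bullet> b = 0" if "a \<in> {n, J n, e2, J e2}" "b \<in> {n, J n, e2, J e2}" "a \<noteq> b" for a b
        proof -
          have L: "n \<bullet> J n = 0" "J n \<bullet> n = 0" "n \<bullet> e2 = 0" "e2 \<bullet> n = 0" "n \<bullet> J e2 = 0"
            "J e2 \<bullet> n = 0" "J n \<bullet> e2 = 0" "e2 \<bullet> J n = 0" "J n \<bullet> J e2 = 0" "J e2 \<bullet> J n = 0"
            "e2 \<bullet> J e2 = 0" "J e2 \<bullet> e2 = 0"
            using cn c2 sk0(1) ne a1 a2 JJ[of n e2] JJ[of e2 n] inner_commute[of n "J n"]
              inner_commute[of e2 n] inner_commute[of n "J e2"] inner_commute[of e2 "J n"]
              inner_commute[of e2 "J e2"]
            by simp_all
          show ?thesis using that L by auto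
        qed
      qed
    qed
    then show ?thesis using that by auto
  qed
  have Je3: "J e3 \<bullet> n = 0" "J e3 \<bullet> e2 = 0"
  proof -
    have "n \<bullet> J e3 = 0" by (rule skew_swap[OF sk]) (use e3 in \<open>auto simp: inner_commute\<close>)
    moreover have "e2 \<bullet> J e3 = 0" by (rule skew_swap[OF sk]) (use e3 in \<open>auto simp: inner_commute\<close>)
    ultimately show "J e3 \<bullet> n = 0" "J e3 \<bullet> e2 = 0" by (auto simp: inner_commute)
  qed
  have "hsf A P J x n e2 e3 c"
  proof (unfold_locales)
    show "n \<bullet> n = 1" "e2 \<bullet> e2 = 1" "e3 \<bullet> e3 = 1" "n \<bullet> e2 = 0" using nn ee e3 ne by auto
    show "n \<bullet> e3 = 0" "e2 \<bullet> e3 = 0" using e3 by (auto simp: inner_commute)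
    show "n \<bullet> J n = c" "e2 \<bullet> J e2 = c" by (fact cn, fact c2)
    show "e3 \<bullet> J e3 = c" using skew_vJv[OF sk, of e3] e3 by simp
    show "n \<bullet> J e2 = 0" "e2 \<bullet> J n = 0" by (fact a1, fact a2)
    show "n \<bullet> J e3 = 0" "e2 \<bullet> J e3 = 0" using Je3 by (auto simp: inner_commute)
    show "e3 \<bullet> J n = 0" "e3 \<bullet> J e2 = 0" using e3 by auto
    show "x = span {n, J n}" by (fact xe)
  qed
  then show ?thesis by blast
qed

lemma main_generic:
  assumes sk: "skew J c" and infdim: "\<not> (\<exists>B :: 'a set. finite B \<and> span B = UNIV)"
    and nn: "n \<bullet> n = 1" and xe: "x = span {n, J n}"
    and yA: "y \<in> A" and Py: "P y = 0"
    and phase: "\<not> orth_sub x y \<Longrightarrow> \<exists>w. y = span {w, J w} \<and> w \<bullet> n \<noteq> 0 \<and> w \<bullet> J n = c * (w \<bullet> n)"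
  shows "orth_sub x y \<and> (\<exists>z\<in>A. z \<subseteq> join_sub x y \<and> P z = 1 / 2)"
proof -
  have cn: "n \<bullet> J n = c" using skew_vJv[OF sk, of n] nn by simp
  have orth: "orth_sub x y"
  proof (rule ccontr)
    assume no: "\<not> orth_sub x y"
    obtain w where w: "y = span {w, J w}" "w \<bullet> n \<noteq> 0" "w \<bullet> J n = c * (w \<bullet> n)"
      using phase[OF no] by blast
    define \<alpha> where "\<alpha> = w \<bullet> n"
    define w' where "w' = w - \<alpha> *\<^sub>R n"
    have w'n: "w' \<bullet> n = 0" unfolding w'_def \<alpha>_def using nn by (simp add: inner_diff_left)
    have w'Jn: "w' \<bullet> J n = 0" unfolding w'_def \<alpha>_def using w(3) cn by (simp add: inner_diff_left)
    show False
    proof (cases "w' = 0")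
      case True
      then have "w = \<alpha> *\<^sub>R n" unfolding w'_def by simp
      then have "y = x" using w(1) xe span_pair_scale[OF linJ, of \<alpha> n] w(2) \<alpha>_def by simp
      then show False using Py Px by simp
    next
      case False
      define \<beta> where "\<beta> = norm w'"
      have bpos: "\<beta> > 0" using False \<beta>_def by simp
      define e2 where "e2 = (1 / \<beta>) *\<^sub>R w'"
      have ee: "e2 \<bullet> e2 = 1" unfolding e2_def \<beta>_def using False
        by (simp add: power2_norm_eq_inner[symmetric] power2_eq_square)
      have ne: "n \<bullet> e2 = 0" unfolding e2_def using w'n by (simp add: inner_commute)
      have a2: "e2 \<bullet> J n = 0" unfolding e2_def using w'Jn by simp
      have a1: "n \<bullet> J e2 = 0" by (rule skew_swap[OF sk]) (use ne a2 in \<open>auto simp: inner_commute\<close>)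
      obtain e3 where H: "hsf A P J x n e2 e3 c"
        using frame_build[OF sk infdim nn ee ne a1 a2 xe] by blast
      interpret F: hsf A P J x n e2 e3 c by (rule H)
      have i1: "F.iv (1, complex_of_real (\<beta> / \<alpha>)) = n + (\<beta> / \<alpha>) *\<^sub>R e2"
        by (simp add: F.iv_def)
      have "\<alpha> *\<^sub>R (n + (\<beta> / \<alpha>) *\<^sub>R e2) = \<alpha> *\<^sub>R n + w'"
        unfolding e2_def using w(2) bpos \<alpha>_def by (simp add: scaleR_add_right)
      also have "\<dots> = w" unfolding w'_def by simp
      finally have wv: "w = \<alpha> *\<^sub>R F.iv (1, complex_of_real (\<beta> / \<alpha>))" using i1 by simp
      have "y = F.Kt (1, complex_of_real (\<beta> / \<alpha>))"
        unfolding F.Kt_def w(1) wv using span_pair_scale[OF linJ] w(2) \<alpha>_def by simp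
      then have "P y = F.Ft (complex_of_real (\<beta> / \<alpha>))" unfolding F.Ft_def by simp
      then show False using F.Ft_pos[of "complex_of_real (\<beta> / \<alpha>)"] Py by linarith
    qed
  qed
  obtain w0 where w0: "w0 \<noteq> 0" "y = span {w0, J w0}" using yA A_eq by auto
  define e2 where "e2 = (1 / norm w0) *\<^sub>R w0"
  have ye: "y = span {e2, J e2}" unfolding e2_def using span_pair_scale[OF linJ] w0 by simp
  have ee: "e2 \<bullet> e2 = 1" unfolding e2_def using w0
    by (simp add: power2_norm_eq_inner[symmetric] power2_eq_square)
  have ox: "\<And>a b. a \<in> x \<Longrightarrow> b \<in> y \<Longrightarrow> a \<bullet> b = 0" using orth unfolding orth_sub_def by blast
  have inx: "n \<in> x" "J n \<in> x" unfolding xe by (simp_all add: span_base)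
  have iny: "e2 \<in> y" "J e2 \<in> y" unfolding ye by (simp_all add: span_base)
  have ne: "n \<bullet> e2 = 0" by (rule ox[OF inx(1) iny(1)])
  have a1: "n \<bullet> J e2 = 0" by (rule ox[OF inx(1) iny(2)])
  have a2: "e2 \<bullet> J n = 0" using ox[OF inx(2) iny(1)] by (simp add: inner_commute)
  obtain e3 where H: "hsf A P J x n e2 e3 c"
    using frame_build[OF sk infdim nn ee ne a1 a2 xe] by blast
  interpret F: hsf A P J x n e2 e3 c by (rule H)
  define z where "z = F.Kt (1, 1)"
  have zA: "z \<in> A" unfolding z_def by (rule F.Kt_A) (simp add: zero_prod_def)
  have Pz: "P z = 1/2" using F.Ft_half[of 1] unfolding F.Ft_def z_def by simp
  have iv11: "F.iv (1, 1) = n + e2" unfolding F.iv_def by simp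
  have "z \<subseteq> span (x \<union> y)"
    unfolding z_def F.Kt_def iv11
  proof (rule span_minimal)
    have "n + e2 \<in> span (x \<union> y)" using inx iny by (intro span_add span_base) auto
    moreover have "J (n + e2) \<in> span (x \<union> y)"
      using inx iny linJ by (simp add: linear_add) (intro span_add span_base; auto)
    ultimately show "{n + e2, J (n + e2)} \<subseteq> span (x \<union> y)" by auto
  qed (rule subspace_span)
  then have "z \<subseteq> join_sub x y" unfolding join_sub_def using closure_subset by blast
  then show ?thesis using orth zA Pz by blast
qed

end



theorem mainTheorem6:
  fixes A :: "'a::{real_inner, complete_space} set set"
    and P :: "'a set \<Rightarrow> real"
    and x y :: "'a set"
  assumes field: "A = real_atoms \<or> (\<exists>J. complex_structure J \<and> A = complex_atoms J)"
    and sep: "separable_space (euclidean :: 'a topology)"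
    and infdim: "\<not> (\<exists>B :: 'a set. finite B \<and> span B = UNIV)"
    and state: "is_state A P"
    and x: "x \<in> A" and y: "y \<in> A"
    and Px: "P x = 1" and Py: "P y = 0"
  shows "orth_sub x y \<and> (\<exists>z\<in>A. z \<subseteq> join_sub x y \<and> P z = 1 / 2)"
  using field
proof
  assume rA: "A = real_atoms"
  define J :: "'a \<Rightarrow> 'a" where "J = (\<lambda>v. v)"
  have linJ: "linear J" unfolding J_def by (rule linear_ident)
  have A_eq: "A = {span {v, J v} | v. v \<noteq> 0}" unfolding rA real_atoms_def J_def by simp
  interpret H: hs A P J x
    by unfold_locales (use linJ A_eq state x Px J_def in auto)
  have sk: "skew J 1" unfolding skew_def J_def by simp
  obtain v0 where v0: "v0 \<noteq> 0" "x = span {v0, J v0}" using x A_eq by auto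
  define n where "n = (1 / norm v0) *\<^sub>R v0"
  have xe: "x = span {n, J n}" unfolding n_def using span_pair_scale[OF linJ] v0 by simp
  have nn: "n \<bullet> n = 1" unfolding n_def using v0
    by (simp add: power2_norm_eq_inner[symmetric] power2_eq_square)
  show ?thesis
  proof (rule H.main_generic[OF sk infdim nn xe y Py])
    assume no: "\<not> orth_sub x y"
    obtain w0 where w0: "w0 \<noteq> 0" "y = span {w0, J w0}" using y A_eq by auto
    have "w0 \<bullet> n \<noteq> 0"
    proof
      assume "w0 \<bullet> n = 0"
      then have "orth_sub x y" unfolding xe w0(2) orth_span_iff J_def by (auto simp: inner_commute)
      then show False using no by simp
    qed
    then show "\<exists>w. y = span {w, J w} \<and> w \<bullet> n \<noteq> 0 \<and> w \<bullet> J n = 1 * (w \<bullet> n)"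
      using w0 J_def by auto
  qed
next
  assume "\<exists>J. complex_structure J \<and> A = complex_atoms J"
  then obtain J where cs: "complex_structure J" and cA: "A = complex_atoms J" by blast
  have linJ: "linear J" and JJ: "\<And>v. J (J v) = - v" and isoJ: "\<And>a b. J a \<bullet> J b = a \<bullet> b"
    using cs unfolding complex_structure_def by auto
  have A_eq: "A = {span {v, J v} | v. v \<noteq> 0}" unfolding cA complex_atoms_def by simp
  interpret H: hs A P J x
    by (intro hs.intro linJ isoJ A_eq state x Px)
  have skw: "v \<bullet> J w = - (J v \<bullet> w)" for v w
  proof -
    have "J v \<bullet> J (J w) = v \<bullet> J w" by (rule isoJ)
    then show ?thesis using JJ[of w] by simp
  qed
  have sk: "skew J 0" unfolding skew_def using skw by simp
  obtain v0 where v0: "v0 \<noteq> 0" "x = span {v0, J v0}" using x A_eq by auto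
  define n where "n = (1 / norm v0) *\<^sub>R v0"
  have xe: "x = span {n, J n}" unfolding n_def using span_pair_scale[OF linJ] v0 by simp
  have nn: "n \<bullet> n = 1" unfolding n_def using v0
    by (simp add: power2_norm_eq_inner[symmetric] power2_eq_square)
  show ?thesis
  proof (rule H.main_generic[OF sk infdim nn xe y Py])
    assume no: "\<not> orth_sub x y"
    obtain w0 where w0: "w0 \<noteq> 0" "y = span {w0, J w0}" using y A_eq by auto
    define a where "a = w0 \<bullet> n"
    define b where "b = w0 \<bullet> J n"
    have Jw0n: "J w0 \<bullet> n = - b" unfolding b_def using skw[of n w0] by (simp add: inner_commute)
    have Jw0Jn: "J w0 \<bullet> J n = a" unfolding a_def by (rule isoJ)
    have ab: "a \<noteq> 0 \<or> b \<noteq> 0"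
    proof (rule ccontr)
      assume "\<not> (a \<noteq> 0 \<or> b \<noteq> 0)"
      then have a0: "a = 0" "b = 0" by auto
      have "orth_sub x y" unfolding xe w0(2) orth_span_iff
        using a0 Jw0n Jw0Jn unfolding a_def b_def by (auto simp: inner_commute)
      then show False using no by simp
    qed
    define d where "d = a^2 + b^2"
    have dpos: "d > 0" unfolding d_def using ab by (auto simp: sum_power2_gt_zero_iff)
    define w where "w = a *\<^sub>R w0 - b *\<^sub>R J w0"
    have Jw: "J w = a *\<^sub>R J w0 + b *\<^sub>R w0" unfolding w_def using linJ JJ
      by (simp add: linear_diff linear_scale)
    have wn: "w \<bullet> n = d" unfolding w_def d_def
      by (simp add: inner_diff_left Jw0n a_def[symmetric] power2_eq_square)
    have wJn: "w \<bullet> J n = 0" unfolding w_def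
      by (simp add: inner_diff_left Jw0Jn b_def[symmetric] a_def)
    have "y = span {w, J w}" unfolding w0(2)
    proof (rule span_pair_eq[symmetric])
      show "w \<in> span {w0, J w0}" unfolding w_def by (intro span_diff span_scale span_base) auto
      show "J w \<in> span {w0, J w0}" unfolding Jw by (intro span_add span_scale span_base) auto
      have "a *\<^sub>R w + b *\<^sub>R J w = d *\<^sub>R w0"
        unfolding Jw unfolding w_def d_def by (simp add: algebra_simps power2_eq_square)
      then have "w0 = (1/d) *\<^sub>R (a *\<^sub>R w + b *\<^sub>R J w)" using dpos by simp
      then show "w0 \<in> span {w, J w}" by (metis span_add span_scale span_base insertI1 insertI2)
      have "a *\<^sub>R J w - b *\<^sub>R w = d *\<^sub>R J w0"
        unfolding Jw unfolding w_def d_def by (simp add: algebra_simps power2_eq_square)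
      then have "J w0 = (1/d) *\<^sub>R (a *\<^sub>R J w - b *\<^sub>R w)" using dpos by simp
      then show "J w0 \<in> span {w, J w}" by (metis span_diff span_scale span_base insertI1 insertI2)
    qed
    then show "\<exists>w. y = span {w, J w} \<and> w \<bullet> n \<noteq> 0 \<and> w \<bullet> J n = 0 * (w \<bullet> n)"
      using wn wJn dpos by auto
  qed
qed



end
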